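(* Let $X$ be a complete nonsingular toric variety which is Fano and all of whose toric subvarieties are Fano, with fan $\Delta$. Let $\{D_1,\ldots,D_j\}$ and $\{\widehat D_1,\ldots,\widehat D_k\}$ be distinct primitive sets with primitive relations $\rho_1+\cdots+\rho_j=\rho'$ and $\widehat\rho_1+\cdots+\widehat\rho_k=\widehat\rho'$, where $\rho',\widehat\rho'$ are ray generators. If $\rho'=\widehat\rho'$, or $\rho'$ and $\widehat\rho'$ span a cone of $\Delta$, then $\{\rho_1,\ldots,\rho_j\}\cap\{\widehat\rho_1,\ldots,\widehat\rho_k\}=\emptyset$.
   Context: Toric divisors $D$ correspond to ray generators $\rho$ (primitive generators of rays of $\Delta$). A primitive set is a set of toric divisors with empty intersection whose proper subsets all have nonempty intersection; its primitive relation expresses the sum of its ray generators as a positive combination of the generators of the unique cone containing that sum in its relative interior. *)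

theory Defs
  imports "HOL-Analysis.Analysis"
begin

text \<open>Combinatorial model of a complete nonsingular toric variety X_\<Delta>.
  The lattice N is the integer points of real^'n.  A (simplicial) fan \<Delta> is
  recorded by its set of ray generators R and by the set of cones, each cone
  being identified with the finite set of ray generators of its rays.\<close>

definition lattice_point :: "real ^ 'n \<Rightarrow> bool" where
  "lattice_point v \<longleftrightarrow> (\<forall>i. v $ i \<in> \<int>)"

definition primitive_vector :: "real ^ 'n \<Rightarrow> bool" where
  "primitive_vector v \<longleftrightarrow> lattice_point v \<and> v \<noteq> 0 \<and>
     (\<forall>t::real. 0 < t \<and> lattice_point (t *\<^sub>R v) \<longrightarrow> 1 \<le> t)"

definition pos_cone :: "(real ^ 'n) set \<Rightarrow> (real ^ 'n) set" where
  "pos_cone S = {x. \<exists>c. (\<forall>v\<in>S. 0 \<le> c v) \<and> x = (\<Sum>v\<in>S. c v *\<^sub>R v)}"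

definition part_of_Z_basis :: "(real ^ 'n) set \<Rightarrow> bool" where
  "part_of_Z_basis S \<longleftrightarrow> (\<exists>B. S \<subseteq> B \<and> finite B \<and> card B = CARD('n) \<and>
      (\<forall>b\<in>B. lattice_point b) \<and>
      (\<forall>x. lattice_point x \<longrightarrow> (\<exists>k::real ^ 'n \<Rightarrow> int. x = (\<Sum>b\<in>B. of_int (k b) *\<^sub>R b))))"

definition complete_nonsingular_fan ::
  "(real ^ 'n) set \<Rightarrow> (real ^ 'n) set set \<Rightarrow> bool" where
  "complete_nonsingular_fan R \<Delta> \<longleftrightarrow>
     finite R \<and> (\<forall>\<rho>\<in>R. primitive_vector \<rho>) \<and>
     (\<forall>\<sigma>\<in>\<Delta>. \<sigma> \<subseteq> R) \<and>
     (\<forall>\<rho>\<in>R. {\<rho>} \<in> \<Delta>) \<and>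
     (\<forall>\<sigma>\<in>\<Delta>. \<forall>\<tau>. \<tau> \<subseteq> \<sigma> \<longrightarrow> \<tau> \<in> \<Delta>) \<and>
     (\<forall>\<sigma>\<in>\<Delta>. part_of_Z_basis \<sigma>) \<and>
     (\<forall>\<sigma>\<in>\<Delta>. \<forall>\<tau>\<in>\<Delta>. pos_cone \<sigma> \<inter> pos_cone \<tau> = pos_cone (\<sigma> \<inter> \<tau>)) \<and>
     (\<Union>\<sigma>\<in>\<Delta>. pos_cone \<sigma>) = UNIV"

definition maximal_cone :: "(real ^ 'n) set set \<Rightarrow> (real ^ 'n) set \<Rightarrow> bool" where
  "maximal_cone \<Delta> \<sigma> \<longleftrightarrow> \<sigma> \<in> \<Delta> \<and> (\<forall>\<sigma>'\<in>\<Delta>. \<sigma> \<subseteq> \<sigma>' \<longrightarrow> \<sigma>' = \<sigma>)"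

text \<open>The orbit closure V(\<tau>) is the toric variety of the star fan of \<tau> in
  N(\<tau>) = N / (span \<tau> \<inter> N).  Its rays are the images of the \<rho> \<notin> \<tau> with
  \<tau> \<union> {\<rho>} \<in> \<Delta>, its maximal cones the images of the maximal cones \<sigma> \<supseteq> \<tau>,
  and linear functionals on N(\<tau>)_R are the functionals m on N_R vanishing on \<tau>.
  V(\<tau>) is Fano iff its anticanonical divisor (sum of all its toric divisors)
  is ample, i.e. (toric ampleness criterion) iff for every maximal cone \<sigma>
  there is m with m(\<rho>) = 1 on the rays of \<sigma> and m(\<rho>) < 1 on the other rays.\<close>
definition orbit_closure_fano ::
  "(real ^ 'n) set \<Rightarrow> (real ^ 'n) set set \<Rightarrow> (real ^ 'n) set \<Rightarrow> bool" where
  "orbit_closure_fano R \<Delta> \<tau> \<longleftrightarrow>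
     (\<forall>\<sigma>. maximal_cone \<Delta> \<sigma> \<and> \<tau> \<subseteq> \<sigma> \<longrightarrow>
        (\<exists>m::real ^ 'n. (\<forall>\<rho>\<in>\<tau>. m \<bullet> \<rho> = 0) \<and>
            (\<forall>\<rho>\<in>\<sigma> - \<tau>. m \<bullet> \<rho> = 1) \<and>
            (\<forall>\<rho>\<in>R. \<rho> \<notin> \<sigma> \<and> \<tau> \<union> {\<rho>} \<in> \<Delta> \<longrightarrow> m \<bullet> \<rho> < 1)))"

text \<open>X itself is the orbit closure of the zero cone.\<close>
definition toric_fano :: "(real ^ 'n) set \<Rightarrow> (real ^ 'n) set set \<Rightarrow> bool" where
  "toric_fano R \<Delta> \<longleftrightarrow> orbit_closure_fano R \<Delta> {}"

text \<open>Primitive set: toric divisors with empty intersection (= their rays do not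
  span a cone) all of whose proper subsets have nonempty intersection.\<close>
definition primitive_set :: "(real ^ 'n) set \<Rightarrow> (real ^ 'n) set set \<Rightarrow> (real ^ 'n) set \<Rightarrow> bool" where
  "primitive_set R \<Delta> P \<longleftrightarrow> P \<subseteq> R \<and> P \<notin> \<Delta> \<and> (\<forall>Q. Q \<subset> P \<longrightarrow> Q \<in> \<Delta>)"

text \<open>Primitive relation of P: sum of P = \<Sum> c_\<rho> \<rho> over the generators of the
  cone \<sigma> containing the sum in its relative interior (all c_\<rho> > 0).\<close>
definition primitive_relation ::
  "(real ^ 'n) set \<Rightarrow> (real ^ 'n) set set \<Rightarrow> (real ^ 'n) set \<Rightarrow> (real ^ 'n) set \<Rightarrow> (real ^ 'n \<Rightarrow> real) \<Rightarrow> bool" where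
  "primitive_relation R \<Delta> P \<sigma> c \<longleftrightarrow> primitive_set R \<Delta> P \<and> \<sigma> \<in> \<Delta> \<and>
     (\<forall>\<rho>\<in>\<sigma>. 0 < c \<rho>) \<and> (\<Sum>\<rho>\<in>P. \<rho>) = (\<Sum>\<rho>\<in>\<sigma>. c \<rho> *\<^sub>R \<rho>)"

end

theory Submission
  imports Defs
begin

lemma IU:
  fixes S :: "('a::real_vector) set"
  assumes "independent S" "finite S" "(\<Sum>v\<in>S. f v *\<^sub>R v) = (\<Sum>v\<in>S. g v *\<^sub>R v)" "v \<in> S"
  shows "f v = g v"
proof -
  have "(\<Sum>v\<in>S. (f v - g v) *\<^sub>R v) = 0"
    using assms(3) by (simp add: scaleR_diff_left sum_subtractf)
  then have "f v - g v = 0"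
    using real_vector.independentD[OF assms(1) assms(2) order_refl, of "\<lambda>v. f v - g v"] assms(4) by blast
  then show ?thesis by simp
qed

lemma lattice_Basis: "b \<in> (Basis :: (real^'n) set) \<Longrightarrow> lattice_point b"
  unfolding lattice_point_def Basis_vec_def
  by (auto simp: axis_def)

lemma cone_indep:
  fixes R :: "(real ^ 'n) set"
  assumes "complete_nonsingular_fan R \<Delta>" "\<sigma> \<in> \<Delta>"
  shows "independent \<sigma> \<and> finite \<sigma>"
proof -
  have "part_of_Z_basis \<sigma>" using assms unfolding complete_nonsingular_fan_def by simp
  then obtain B where B: "\<sigma> \<subseteq> B" "finite B" "card B = CARD('n)" "\<forall>b\<in>B. lattice_point b"
    "\<forall>x. lattice_point x \<longrightarrow> (\<exists>k::real ^ 'n \<Rightarrow> int. x = (\<Sum>b\<in>B. of_int (k b) *\<^sub>R b))"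
    unfolding part_of_Z_basis_def by blast
  have "Basis \<subseteq> span B"
  proof
    fix b :: "real^'n" assume "b \<in> Basis"
    then obtain k :: "real ^ 'n \<Rightarrow> int" where "b = (\<Sum>c\<in>B. of_int (k c) *\<^sub>R c)"
      using B(5) lattice_Basis by blast
    then show "b \<in> span B" by (simp add: span_sum span_mul span_base span_scale)
  qed
  then have "UNIV \<subseteq> span B"
    by (metis span_Basis span_mono span_span)
  then have "independent B"
    by (intro card_le_dim_spanning[of B UNIV]) (auto simp: B dim_UNIV)
  then show ?thesis using B(1,2) independent_mono finite_subset by blast
qed


lemma fanD:
  assumes "complete_nonsingular_fan R \<Delta>"
  shows "finite R" "\<forall>\<rho>\<in>R. primitive_vector \<rho>" "\<forall>\<sigma>\<in>\<Delta>. \<sigma> \<subseteq> R" "\<forall>\<rho>\<in>R. {\<rho>} \<in> \<Delta>"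
    "\<forall>\<sigma>\<in>\<Delta>. \<forall>\<tau>. \<tau> \<subseteq> \<sigma> \<longrightarrow> \<tau> \<in> \<Delta>" "\<forall>\<sigma>\<in>\<Delta>. part_of_Z_basis \<sigma>"
    "\<forall>\<sigma>\<in>\<Delta>. \<forall>\<tau>\<in>\<Delta>. pos_cone \<sigma> \<inter> pos_cone \<tau> = pos_cone (\<sigma> \<inter> \<tau>)"
    "(\<Union>\<sigma>\<in>\<Delta>. pos_cone \<sigma>) = UNIV"
  using assms unfolding complete_nonsingular_fan_def by simp_all

lemma fan_finite_Delta:
  assumes "complete_nonsingular_fan R \<Delta>"
  shows "finite \<Delta>"
proof -
  have "\<Delta> \<subseteq> Pow R" using fanD(3)[OF assms] by blast
  moreover have "finite (Pow R)" using fanD(1)[OF assms] by simp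
  ultimately show ?thesis by (rule finite_subset)
qed

lemma fan_sub:
  assumes "complete_nonsingular_fan R \<Delta>" "\<sigma> \<in> \<Delta>" "\<tau> \<subseteq> \<sigma>"
  shows "\<tau> \<in> \<Delta>"
  using fanD(5)[OF assms(1)] assms(2,3) by blast

lemma sum_ind_subset:
  fixes A :: "('a::real_vector) set"
  assumes "finite A" "B \<subseteq> A"
  shows "(\<Sum>\<rho>\<in>A. (if \<rho> \<in> B then 1 else 0) *\<^sub>R \<rho>) = (\<Sum>\<rho>\<in>B. \<rho>)"
proof -
  have "(\<Sum>\<rho>\<in>A. (if \<rho> \<in> B then 1 else 0) *\<^sub>R \<rho>) = (\<Sum>\<rho>\<in>A. if \<rho> \<in> B then \<rho> else 0)"
    by (rule sum.cong) auto
  also have "\<dots> = (\<Sum>\<rho>\<in>A \<inter> B. \<rho>)" using sum.inter_restrict[OF assms(1), of "\<lambda>x. x" B] by simp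
  also have "A \<inter> B = B" using assms(2) by blast
  finally show ?thesis .
qed

lemma sum_ind_delta:
  fixes A :: "('a::real_vector) set"
  assumes "finite A" "a \<in> A"
  shows "(\<Sum>\<rho>\<in>A. (if \<rho> = a then c else 0) *\<^sub>R \<rho>) = c *\<^sub>R a"
proof -
  have "(\<Sum>\<rho>\<in>A. (if \<rho> = a then c else 0) *\<^sub>R \<rho>) = (\<Sum>\<rho>\<in>A. if \<rho> = a then c *\<^sub>R \<rho> else 0)"
    by (rule sum.cong) auto
  also have "\<dots> = c *\<^sub>R a" using assms by (simp add: sum.delta')
  finally show ?thesis .
qed

lemma pos_cone_mono:
  fixes \<sigma> :: "(real^'n) set"
  assumes "finite \<sigma>'" "\<sigma> \<subseteq> \<sigma>'"
  shows "pos_cone \<sigma> \<subseteq> pos_cone \<sigma>'"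
proof
  fix x assume "x \<in> pos_cone \<sigma>"
  then obtain c where c: "\<forall>v\<in>\<sigma>. 0 \<le> c v" "x = (\<Sum>v\<in>\<sigma>. c v *\<^sub>R v)"
    unfolding pos_cone_def by blast
  define c' where "c' v = (if v \<in> \<sigma> then c v else 0)" for v
  have "(\<Sum>v\<in>\<sigma>'. c' v *\<^sub>R v) = (\<Sum>v\<in>\<sigma>. c' v *\<^sub>R v)"
    by (rule sum.mono_neutral_right) (use assms in \<open>auto simp: c'_def\<close>)
  also have "\<dots> = x" using c by (simp add: c'_def)
  finally have "x = (\<Sum>v\<in>\<sigma>'. c' v *\<^sub>R v)" by simp
  moreover have "\<forall>v\<in>\<sigma>'. 0 \<le> c' v" using c(1) by (simp add: c'_def)
  ultimately show "x \<in> pos_cone \<sigma>'" unfolding pos_cone_def by blast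
qed

lemma pos_cone_span: "pos_cone \<sigma> \<subseteq> span \<sigma>"
  unfolding pos_cone_def
  apply clarify
  apply (rule span_sum)
  apply (rule span_scale)
  apply (rule span_base)
  by assumption

lemma cone_unique:
  fixes R :: "(real ^ 'n) set"
  assumes F: "complete_nonsingular_fan R \<Delta>" and s1: "\<sigma>1 \<in> \<Delta>" and s2: "\<sigma>2 \<in> \<Delta>"
    and f1: "\<forall>\<rho>\<in>\<sigma>1. 0 \<le> f1 \<rho>" and f2: "\<forall>\<rho>\<in>\<sigma>2. 0 \<le> f2 \<rho>"
    and eq: "(\<Sum>\<rho>\<in>\<sigma>1. f1 \<rho> *\<^sub>R \<rho>) = (\<Sum>\<rho>\<in>\<sigma>2. f2 \<rho> *\<^sub>R \<rho>)"
    and r: "\<rho> \<in> \<sigma>1"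
  shows "f1 \<rho> = (if \<rho> \<in> \<sigma>2 then f2 \<rho> else 0)"
proof -
  have i1: "independent \<sigma>1" "finite \<sigma>1" using cone_indep[OF F s1] by auto
  have i2: "independent \<sigma>2" "finite \<sigma>2" using cone_indep[OF F s2] by auto
  define w where "w = (\<Sum>\<rho>\<in>\<sigma>1. f1 \<rho> *\<^sub>R \<rho>)"
  have "w \<in> pos_cone \<sigma>1" unfolding w_def pos_cone_def using f1 by blast
  moreover have "w \<in> pos_cone \<sigma>2" unfolding w_def eq pos_cone_def using f2 by blast
  moreover have "\<forall>\<sigma>\<in>\<Delta>. \<forall>\<tau>\<in>\<Delta>. pos_cone \<sigma> \<inter> pos_cone \<tau> = pos_cone (\<sigma> \<inter> \<tau>)"
    using fanD(7)[OF F] .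
  ultimately have "w \<in> pos_cone (\<sigma>1 \<inter> \<sigma>2)"
    using s1 s2 by blast
  then obtain g where g: "w = (\<Sum>\<rho>\<in>\<sigma>1 \<inter> \<sigma>2. g \<rho> *\<^sub>R \<rho>)"
    unfolding pos_cone_def by blast
  have gen: "(\<Sum>\<rho>\<in>A. (if \<rho> \<in> B then g \<rho> else 0) *\<^sub>R \<rho>) = (\<Sum>\<rho>\<in>A \<inter> B. g \<rho> *\<^sub>R \<rho>)"
    if "finite A" for A B
  proof -
    have "(\<Sum>\<rho>\<in>A. (if \<rho> \<in> B then g \<rho> else 0) *\<^sub>R \<rho>) = (\<Sum>\<rho>\<in>A. if \<rho> \<in> B then g \<rho> *\<^sub>R \<rho> else 0)"
      by (rule sum.cong) auto
    also have "\<dots> = (\<Sum>\<rho>\<in>A \<inter> B. g \<rho> *\<^sub>R \<rho>)" using sum.inter_restrict[OF that, of "\<lambda>\<rho>. g \<rho> *\<^sub>R \<rho>" B] by simp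
    finally show ?thesis .
  qed
  have e1: "(\<Sum>\<rho>\<in>\<sigma>1. f1 \<rho> *\<^sub>R \<rho>) = (\<Sum>\<rho>\<in>\<sigma>1. (if \<rho> \<in> \<sigma>2 then g \<rho> else 0) *\<^sub>R \<rho>)"
    using gen[OF i1(2), of \<sigma>2] g w_def by simp
  have e2: "(\<Sum>\<rho>\<in>\<sigma>2. f2 \<rho> *\<^sub>R \<rho>) = (\<Sum>\<rho>\<in>\<sigma>2. (if \<rho> \<in> \<sigma>1 then g \<rho> else 0) *\<^sub>R \<rho>)"
    using gen[OF i2(2), of \<sigma>1] g w_def eq by (simp add: Int_commute)
  have a1: "f1 \<rho> = (if \<rho> \<in> \<sigma>2 then g \<rho> else 0)"
    using IU[OF i1 e1 r] .
  show ?thesis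
  proof (cases "\<rho> \<in> \<sigma>2")
    case True
    have "f2 \<rho> = (if \<rho> \<in> \<sigma>1 then g \<rho> else 0)" using IU[OF i2 e2 True] .
    then show ?thesis using a1 r True by simp
  next
    case False then show ?thesis using a1 by simp
  qed
qed

lemma exists_maximal:
  assumes F: "complete_nonsingular_fan R \<Delta>" and s: "\<sigma> \<in> \<Delta>"
  shows "\<exists>\<sigma>'. maximal_cone \<Delta> \<sigma>' \<and> \<sigma> \<subseteq> \<sigma>'"
proof -
  have "finite {\<sigma>'\<in>\<Delta>. \<sigma> \<subseteq> \<sigma>'}" using fan_finite_Delta[OF F] by simp
  from finite_has_maximal2[OF this, of \<sigma>] s
  obtain m where "m \<in> {\<sigma>'\<in>\<Delta>. \<sigma> \<subseteq> \<sigma>'}" "\<sigma> \<subseteq> m" "\<forall>b\<in>{\<sigma>'\<in>\<Delta>. \<sigma> \<subseteq> \<sigma>'}. m \<subseteq> b \<longrightarrow> m = b"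
    by auto
  then have "maximal_cone \<Delta> m"
    unfolding maximal_cone_def
  proof (intro conjI ballI impI)
    fix b assume "b \<in> \<Delta>" "m \<subseteq> b"
    moreover have "\<sigma> \<subseteq> b" using \<open>\<sigma> \<subseteq> m\<close> \<open>m \<subseteq> b\<close> by blast
    ultimately show "b = m" using \<open>\<forall>b\<in>{\<sigma>'\<in>\<Delta>. \<sigma> \<subseteq> \<sigma>'}. m \<subseteq> b \<longrightarrow> m = b\<close> by blast
  qed (use \<open>m \<in> {\<sigma>'\<in>\<Delta>. \<sigma> \<subseteq> \<sigma>'}\<close> in auto)
  then show ?thesis using \<open>\<sigma> \<subseteq> m\<close> by blast
qed


lemma N_lemma:
  fixes R :: "(real ^ 'n) set"
  assumes F: "complete_nonsingular_fan R \<Delta>" and t: "\<tau> \<in> \<Delta>"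
  shows "\<exists>\<sigma>. maximal_cone \<Delta> \<sigma> \<and> \<tau> \<subseteq> \<sigma> \<and> (\<exists>\<epsilon>>0. (\<Sum>\<rho>\<in>\<tau>. \<rho>) + \<epsilon> *\<^sub>R v \<in> pos_cone \<sigma>)"
proof -
  define p where "p = (\<Sum>\<rho>\<in>\<tau>. \<rho>)"
  define e where "e k = 1 / real (Suc k)" for k
  have epos: "e k > 0" for k unfolding e_def by simp
  have "\<exists>\<sigma>\<in>\<Delta>. p + e k *\<^sub>R v \<in> pos_cone \<sigma>" for k
    using fanD(8)[OF F] by blast
  then have "\<forall>k. \<exists>\<sigma>. \<sigma> \<in> \<Delta> \<and> p + e k *\<^sub>R v \<in> pos_cone \<sigma>" by blast
  then obtain s where s0: "\<forall>k. s k \<in> \<Delta> \<and> p + e k *\<^sub>R v \<in> pos_cone (s k)"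
    by (rule choice[THEN exE]) blast
  then have s: "\<And>k. s k \<in> \<Delta>" "\<And>k. p + e k *\<^sub>R v \<in> pos_cone (s k)" by auto
  have "s ` UNIV \<subseteq> \<Delta>" using s(1) by blast
  then have "finite (s ` UNIV)" using fan_finite_Delta[OF F] by (rule finite_subset)
  from pigeonhole_infinite[OF infinite_UNIV_nat this]
  obtain k0 where "infinite {a \<in> UNIV. s a = s k0}" by blast
  define \<sigma> where "\<sigma> = s k0"
  define K where "K = {k. s k = \<sigma>}"
  have Kinf: "infinite K" using \<open>infinite {a \<in> UNIV. s a = s k0}\<close> unfolding K_def \<sigma>_def by simp
  have sD: "\<sigma> \<in> \<Delta>" unfolding \<sigma>_def using s(1) .
  have ind: "independent \<sigma>" "finite \<sigma>" using cone_indep[OF F sD] by auto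
  have inK: "p + e k *\<^sub>R v \<in> pos_cone \<sigma>" if "k \<in> K" for k
    using s(2)[of k] that unfolding K_def by simp
  have k0K: "k0 \<in> K" unfolding K_def \<sigma>_def by simp
  obtain k2 where "k2 > k0" "k2 \<in> K" using Kinf unfolding infinite_nat_iff_unbounded by blast
  have ediff: "e k0 \<noteq> e k2" unfolding e_def using \<open>k2 > k0\<close> by (simp add: divide_simps)
  obtain c1 where c1: "\<forall>\<rho>\<in>\<sigma>. 0 \<le> c1 \<rho>" "p + e k0 *\<^sub>R v = (\<Sum>\<rho>\<in>\<sigma>. c1 \<rho> *\<^sub>R \<rho>)"
    using inK[OF k0K] unfolding pos_cone_def by blast
  obtain c2 where c2: "\<forall>\<rho>\<in>\<sigma>. 0 \<le> c2 \<rho>" "p + e k2 *\<^sub>R v = (\<Sum>\<rho>\<in>\<sigma>. c2 \<rho> *\<^sub>R \<rho>)"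
    using inK[OF \<open>k2 \<in> K\<close>] unfolding pos_cone_def by blast
  define b where "b \<rho> = (c1 \<rho> - c2 \<rho>) / (e k0 - e k2)" for \<rho>
  define a where "a \<rho> = c1 \<rho> - e k0 * b \<rho>" for \<rho>
  have "(\<Sum>\<rho>\<in>\<sigma>. (c1 \<rho> - c2 \<rho>) *\<^sub>R \<rho>) = (p + e k0 *\<^sub>R v) - (p + e k2 *\<^sub>R v)"
    using c1(2) c2(2) by (simp add: scaleR_diff_left sum_subtractf)
  also have "\<dots> = (e k0 - e k2) *\<^sub>R v" by (simp add: scaleR_diff_left)
  finally have "(e k0 - e k2) *\<^sub>R v = (\<Sum>\<rho>\<in>\<sigma>. (c1 \<rho> - c2 \<rho>) *\<^sub>R \<rho>)" by simp
  moreover have "v = (1 / (e k0 - e k2)) *\<^sub>R ((e k0 - e k2) *\<^sub>R v)"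
    using ediff by simp
  ultimately have "v = (1 / (e k0 - e k2)) *\<^sub>R (\<Sum>\<rho>\<in>\<sigma>. (c1 \<rho> - c2 \<rho>) *\<^sub>R \<rho>)"
    by simp
  then have vrep: "v = (\<Sum>\<rho>\<in>\<sigma>. b \<rho> *\<^sub>R \<rho>)"
    unfolding b_def by (simp add: scaleR_sum_right)
  have prep: "p = (\<Sum>\<rho>\<in>\<sigma>. a \<rho> *\<^sub>R \<rho>)"
  proof -
    have "p = (\<Sum>\<rho>\<in>\<sigma>. c1 \<rho> *\<^sub>R \<rho>) - e k0 *\<^sub>R v" using c1(2) by (simp add: algebra_simps)
    also have "\<dots> = (\<Sum>\<rho>\<in>\<sigma>. a \<rho> *\<^sub>R \<rho>)"
      unfolding vrep a_def by (simp add: scaleR_sum_right scaleR_diff_left sum_subtractf)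
    finally show ?thesis .
  qed
  have key: "0 \<le> a \<rho> + e k * b \<rho>" if kK: "k \<in> K" and rs: "\<rho> \<in> \<sigma>" for k \<rho>
  proof -
    obtain c where c: "\<forall>\<rho>\<in>\<sigma>. 0 \<le> c \<rho>" "p + e k *\<^sub>R v = (\<Sum>\<rho>\<in>\<sigma>. c \<rho> *\<^sub>R \<rho>)"
      using inK[OF kK] unfolding pos_cone_def by blast
    have "p + e k *\<^sub>R v = (\<Sum>\<rho>\<in>\<sigma>. (a \<rho> + e k * b \<rho>) *\<^sub>R \<rho>)"
      unfolding prep vrep by (simp add: scaleR_sum_right scaleR_add_left sum.distrib)
    then have "(\<Sum>\<rho>\<in>\<sigma>. c \<rho> *\<^sub>R \<rho>) = (\<Sum>\<rho>\<in>\<sigma>. (a \<rho> + e k * b \<rho>) *\<^sub>R \<rho>)" using c(2) by simp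
    then have "c \<rho> = a \<rho> + e k * b \<rho>" by (rule IU[OF ind _ rs])
    moreover have "0 \<le> c \<rho>" using c(1) rs by blast
    ultimately show ?thesis by linarith
  qed
  have anonneg: "0 \<le> a \<rho>" if "\<rho> \<in> \<sigma>" for \<rho>
  proof (rule ccontr)
    assume "\<not> 0 \<le> a \<rho>"
    then have an: "a \<rho> < 0" by simp
    define M where "M = nat (ceiling (\<bar>b \<rho>\<bar> / (- a \<rho>)))"
    obtain k where "k \<ge> M" "k \<in> K" using Kinf unfolding infinite_nat_iff_unbounded_le by blast
    have "\<bar>b \<rho>\<bar> / (- a \<rho>) \<le> real M" unfolding M_def by linarith
    also have "\<dots> < real (Suc k)" using \<open>k \<ge> M\<close> by simp
    finally have h: "\<bar>b \<rho>\<bar> / (- a \<rho>) < real (Suc k)" .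
    have "\<bar>b \<rho>\<bar> / (- a \<rho>) * (- a \<rho>) < real (Suc k) * (- a \<rho>)"
      using h an by (intro mult_strict_right_mono) auto
    then have "\<bar>b \<rho>\<bar> < real (Suc k) * (- a \<rho>)" using an by simp
    then have "e k * \<bar>b \<rho>\<bar> < - a \<rho>" unfolding e_def by (simp add: divide_simps mult.commute)
    have "a \<rho> + e k * b \<rho> \<ge> 0" using key[OF \<open>k \<in> K\<close> that] .
    moreover have "e k * b \<rho> \<le> e k * \<bar>b \<rho>\<bar>" using epos[of k] by (intro mult_left_mono) auto
    ultimately show False using \<open>e k * \<bar>b \<rho>\<bar> < - a \<rho>\<close> by linarith
  qed
  have tsub: "\<tau> \<subseteq> \<sigma>"
  proof
    fix \<rho> assume r: "\<rho> \<in> \<tau>"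
    have eq: "(\<Sum>\<rho>\<in>\<tau>. 1 *\<^sub>R \<rho>) = (\<Sum>\<rho>\<in>\<sigma>. a \<rho> *\<^sub>R \<rho>)" using prep unfolding p_def by simp
    have "(1::real) = (if \<rho> \<in> \<sigma> then a \<rho> else 0)"
      using cone_unique[OF F t sD _ _ eq r] anonneg by simp
    then show "\<rho> \<in> \<sigma>" by (cases "\<rho> \<in> \<sigma>") auto
  qed
  obtain \<sigma>' where m: "maximal_cone \<Delta> \<sigma>'" "\<sigma> \<subseteq> \<sigma>'" using exists_maximal[OF F sD] by blast
  have "finite \<sigma>'" using cone_indep[OF F] m(1) unfolding maximal_cone_def by blast
  then have "p + e k0 *\<^sub>R v \<in> pos_cone \<sigma>'" using pos_cone_mono m(2) inK[OF k0K] by blast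
  then show ?thesis using m tsub epos[of k0] unfolding p_def by blast
qed


lemma maximal_span:
  fixes R :: "(real ^ 'n) set"
  assumes F: "complete_nonsingular_fan R \<Delta>" and m: "maximal_cone \<Delta> \<sigma>"
  shows "span \<sigma> = UNIV"
proof (rule ccontr)
  assume "span \<sigma> \<noteq> UNIV"
  then obtain v where v: "v \<notin> span \<sigma>" by blast
  have sD: "\<sigma> \<in> \<Delta>" using m unfolding maximal_cone_def by blast
  obtain \<sigma>' \<epsilon> where s': "maximal_cone \<Delta> \<sigma>'" "\<sigma> \<subseteq> \<sigma>'" "\<epsilon> > 0"
    "(\<Sum>\<rho>\<in>\<sigma>. \<rho>) + \<epsilon> *\<^sub>R v \<in> pos_cone \<sigma>'"
    using N_lemma[OF F sD, of v] by blast
  have "\<sigma>' = \<sigma>" using m s'(1,2) unfolding maximal_cone_def by blast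
  then have "(\<Sum>\<rho>\<in>\<sigma>. \<rho>) + \<epsilon> *\<^sub>R v \<in> span \<sigma>" using s'(4) pos_cone_span by blast
  moreover have "(\<Sum>\<rho>\<in>\<sigma>. \<rho>) \<in> span \<sigma>" by (intro span_sum span_base)
  ultimately have "\<epsilon> *\<^sub>R v \<in> span \<sigma>" using span_diff by fastforce
  then have "(1/\<epsilon>) *\<^sub>R (\<epsilon> *\<^sub>R v) \<in> span \<sigma>" by (rule span_scale)
  then show False using v s'(3) by simp
qed

lemma maximal_int:
  fixes R :: "(real ^ 'n) set"
  assumes F: "complete_nonsingular_fan R \<Delta>" and m: "maximal_cone \<Delta> \<sigma>"
    and mi: "\<forall>\<rho>\<in>\<sigma>. w \<bullet> \<rho> \<in> \<int>" and x: "lattice_point x"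
  shows "w \<bullet> x \<in> \<int>"
proof -
  have sD: "\<sigma> \<in> \<Delta>" using m unfolding maximal_cone_def by blast
  have "part_of_Z_basis \<sigma>" using fanD(6)[OF F] sD by blast
  then obtain B where B: "\<sigma> \<subseteq> B" "finite B" "card B = CARD('n)"
    "\<forall>x. lattice_point x \<longrightarrow> (\<exists>k::real ^ 'n \<Rightarrow> int. x = (\<Sum>b\<in>B. of_int (k b) *\<^sub>R b))"
    unfolding part_of_Z_basis_def by blast
  have ind: "independent \<sigma>" using cone_indep[OF F sD] by blast
  have "card \<sigma> = dim \<sigma>" using dim_eq_card_independent[OF ind] by simp
  also have "\<dots> = dim (span \<sigma>)" by (simp add: dim_span)
  also have "\<dots> = CARD('n)" using maximal_span[OF F m] by (simp add: dim_UNIV)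
  finally have "\<sigma> = B" using card_subset_eq[OF B(2) B(1)] B(3) by simp
  then obtain k :: "real ^ 'n \<Rightarrow> int" where k: "x = (\<Sum>b\<in>\<sigma>. of_int (k b) *\<^sub>R b)"
    using B(4) x by blast
  have "w \<bullet> x = (\<Sum>b\<in>\<sigma>. of_int (k b) * (w \<bullet> b))"
    unfolding k by (simp add: inner_sum_right)
  also have "\<dots> \<in> \<int>" using mi by (intro Ints_sum Ints_mult) auto
  finally show ?thesis .
qed

lemma rel_not_mem:
  fixes R :: "(real ^ 'n) set"
  assumes F: "complete_nonsingular_fan R \<Delta>" and P: "primitive_set R \<Delta> P"
    and sP: "(\<Sum>\<rho>\<in>P. \<rho>) = r" and rR: "r \<in> R"
  shows "r \<notin> P"
proof
  assume rP: "r \<in> P"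
  have PR: "P \<subseteq> R" and Pn: "P \<notin> \<Delta>" and Ps: "\<forall>Q. Q \<subset> P \<longrightarrow> Q \<in> \<Delta>"
    using P unfolding primitive_set_def by auto
  have fP: "finite P" using fanD(1)[OF F] PR finite_subset by blast
  have "P - {r} \<subset> P" using rP by blast
  then have D: "P - {r} \<in> \<Delta>" using Ps by blast
  have s0: "(\<Sum>\<rho>\<in>P - {r}. \<rho>) = 0" using sum.remove[OF fP rP, of "\<lambda>x. x"] sP by simp
  show False
  proof (cases "P - {r} = {}")
    case True
    then have "P = {r}" using rP by blast
    then show False using Pn fanD(4)[OF F] rR by blast
  next
    case False
    then obtain q where q: "q \<in> P - {r}" by blast
    have ind: "independent (P - {r})" "finite (P - {r})" using cone_indep[OF F D] by auto
    have "(\<Sum>\<rho>\<in>P - {r}. (\<lambda>_. 1::real) \<rho> *\<^sub>R \<rho>) = (\<Sum>\<rho>\<in>P - {r}. (\<lambda>_. 0) \<rho> *\<^sub>R \<rho>)"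
      using s0 by simp
    from IU[OF ind this q] show False by simp
  qed
qed

lemma int_lt1: "(x::real) \<in> \<int> \<Longrightarrow> x < 1 \<Longrightarrow> x \<le> 0"
proof (erule Ints_cases)
  fix k :: int assume "x = of_int k" "x < 1"
  then have "k < 1" by simp
  then have "k \<le> 0" by simp
  then show "x \<le> 0" using \<open>x = of_int k\<close> by simp
qed


lemma L2_step:
  fixes R :: "(real ^ 'n) set"
  assumes F: "complete_nonsingular_fan R \<Delta>" and fano: "\<forall>\<tau>\<in>\<Delta>. orbit_closure_fano R \<Delta> \<tau>"
    and P: "primitive_set R \<Delta> P" and sP: "(\<Sum>\<rho>\<in>P. \<rho>) = r" and rP: "r \<notin> P"
    and yP: "y \<in> P" and yz: "y \<noteq> z" and QP: "Q \<subseteq> P - {y}" and Qne: "Q \<noteq> P - {y}"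
    and QD: "Q \<union> {r, z} \<in> \<Delta>"
  shows "\<exists>p \<in> P - {y} - Q. insert p Q \<union> {r, z} \<in> \<Delta>"
proof -
  have PR: "P \<subseteq> R" and Ps: "\<forall>Q. Q \<subset> P \<longrightarrow> Q \<in> \<Delta>"
    using P unfolding primitive_set_def by auto
  have fP: "finite P" using fanD(1)[OF F] PR finite_subset by blast
  define \<tau>0 where "\<tau>0 = Q \<union> {r, z}"
  obtain \<sigma> \<epsilon> where \<sigma>: "maximal_cone \<Delta> \<sigma>" "\<tau>0 \<subseteq> \<sigma>" "\<epsilon> > 0"
    "(\<Sum>\<rho>\<in>\<tau>0. \<rho>) + \<epsilon> *\<^sub>R (- y) \<in> pos_cone \<sigma>"
    using N_lemma[OF F QD[folded \<tau>0_def], of "- y"] by blast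
  have sD: "\<sigma> \<in> \<Delta>" using \<sigma>(1) unfolding maximal_cone_def by blast
  have ind: "independent \<sigma>" "finite \<sigma>" using cone_indep[OF F sD] by auto
  have ynot: "y \<notin> \<sigma>"
  proof
    assume ys: "y \<in> \<sigma>"
    have yt: "y \<notin> \<tau>0" unfolding \<tau>0_def using QP rP yP yz by auto
    obtain c where c: "\<forall>\<rho>\<in>\<sigma>. 0 \<le> c \<rho>" "(\<Sum>\<rho>\<in>\<tau>0. \<rho>) + \<epsilon> *\<^sub>R (- y) = (\<Sum>\<rho>\<in>\<sigma>. c \<rho> *\<^sub>R \<rho>)"
      using \<sigma>(4) unfolding pos_cone_def by blast
    define f where "f \<rho> = (if \<rho> \<in> \<tau>0 then 1 else 0) - (if \<rho> = y then \<epsilon> else 0)" for \<rho>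
    have "(\<Sum>\<rho>\<in>\<sigma>. f \<rho> *\<^sub>R \<rho>) = (\<Sum>\<rho>\<in>\<sigma>. (if \<rho> \<in> \<tau>0 then 1 else 0) *\<^sub>R \<rho>) - (\<Sum>\<rho>\<in>\<sigma>. (if \<rho> = y then \<epsilon> else 0) *\<^sub>R \<rho>)"
      unfolding f_def by (simp add: scaleR_diff_left sum_subtractf)
    also have "\<dots> = (\<Sum>\<rho>\<in>\<tau>0. \<rho>) - \<epsilon> *\<^sub>R y"
      using sum_ind_subset[OF ind(2) \<sigma>(2)] sum_ind_delta[OF ind(2) ys] by simp
    also have "\<dots> = (\<Sum>\<rho>\<in>\<sigma>. c \<rho> *\<^sub>R \<rho>)" using c(2) by simp
    finally have "f y = c y" using IU[OF ind _ ys] by blast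
    then have "c y = - \<epsilon>" unfolding f_def using yt by simp
    then show False using c(1) ys \<sigma>(3) by fastforce
  qed
  have "Q \<subset> P" using QP yP by blast
  then have QD': "Q \<in> \<Delta>" using Ps by blast
  obtain m where m0: "\<forall>\<rho>\<in>Q. m \<bullet> \<rho> = 0" and m1: "\<forall>\<rho>\<in>\<sigma> - Q. m \<bullet> \<rho> = 1"
    and m2: "\<forall>\<rho>\<in>R. \<rho> \<notin> \<sigma> \<and> Q \<union> {\<rho>} \<in> \<Delta> \<longrightarrow> m \<bullet> \<rho> < 1"
    using fano QD' \<sigma>(1,2) unfolding orbit_closure_fano_def \<tau>0_def by blast
  have mi: "\<forall>\<rho>\<in>\<sigma>. m \<bullet> \<rho> \<in> \<int>"
  proof
    fix \<rho> assume "\<rho> \<in> \<sigma>"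
    then show "m \<bullet> \<rho> \<in> \<int>" using m0 m1 by (cases "\<rho> \<in> Q") auto
  qed
  have lat: "lattice_point \<rho>" if "\<rho> \<in> R" for \<rho>
    using fanD(2)[OF F] that unfolding primitive_vector_def by blast
  have mr: "m \<bullet> r = 1" using m1 \<sigma>(2) QP rP unfolding \<tau>0_def by auto
  have "(\<Sum>p\<in>P. m \<bullet> p) = 1" using mr sP by (simp add: inner_sum_right[symmetric])
  moreover have "(\<Sum>p\<in>P. m \<bullet> p) = (\<Sum>p\<in>P - Q. m \<bullet> p) + (\<Sum>p\<in>Q. m \<bullet> p)"
    using sum.subset_diff[OF _ fP] QP by blast
  moreover have "(\<Sum>p\<in>Q. m \<bullet> p) = 0" using m0 by simp
  ultimately have s2: "(\<Sum>p\<in>P - Q. m \<bullet> p) = 1" by simp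
  show ?thesis
  proof (cases "\<exists>p\<in>P - Q. p \<in> \<sigma>")
    case True
    then obtain p where p: "p \<in> P - Q" "p \<in> \<sigma>" by blast
    have "p \<noteq> y" using p ynot by blast
    moreover have "insert p Q \<union> {r, z} \<subseteq> \<sigma>" using p \<sigma>(2) unfolding \<tau>0_def by blast
    ultimately show ?thesis using fan_sub[OF F sD] p by blast
  next
    case False
    obtain q where q: "q \<in> P - {y} - Q" using QP Qne by blast
    have "m \<bullet> p \<le> 0" if pP: "p \<in> P - Q" for p
    proof -
      have "Q \<union> {p} \<subset> P"
      proof (cases "p = y")
        case True then show ?thesis using q pP QP by blast
      next
        case False then show ?thesis using yP pP QP by blast
      qed
      then have "Q \<union> {p} \<in> \<Delta>" using Ps by blast
      moreover have "p \<in> R" "p \<notin> \<sigma>" using pP PR False by auto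
      ultimately have "m \<bullet> p < 1" using m2 by blast
      moreover have "m \<bullet> p \<in> \<int>" using maximal_int[OF F \<sigma>(1) mi lat[OF \<open>p \<in> R\<close>]] .
      ultimately show ?thesis using int_lt1 by blast
    qed
    then have "(\<Sum>p\<in>P - Q. m \<bullet> p) \<le> 0" by (intro sum_nonpos) blast
    then show ?thesis using s2 by simp
  qed
qed


lemma L2:
  fixes R :: "(real ^ 'n) set"
  assumes F: "complete_nonsingular_fan R \<Delta>" and fano: "\<forall>\<tau>\<in>\<Delta>. orbit_closure_fano R \<Delta> \<tau>"
    and P: "primitive_set R \<Delta> P" and sP: "(\<Sum>\<rho>\<in>P. \<rho>) = r" and rR: "r \<in> R"
    and rz: "{r, z} \<in> \<Delta>" and yP: "y \<in> P" and yz: "y \<noteq> z"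
  shows "(P - {y}) \<union> {r, z} \<in> \<Delta>"
proof -
  have rP: "r \<notin> P" using rel_not_mem[OF F P sP rR] .
  have PR: "P \<subseteq> R" using P unfolding primitive_set_def by auto
  have fP: "finite P" using fanD(1)[OF F] PR finite_subset by blast
  have ind: "\<And>Q. Q \<subseteq> P - {y} \<Longrightarrow> Q \<union> {r, z} \<in> \<Delta> \<Longrightarrow> card (P - {y} - Q) = n
      \<Longrightarrow> (P - {y}) \<union> {r, z} \<in> \<Delta>" for n
  proof (induction n)
    case 0
    have "finite (P - {y} - Q)" using fP by simp
    then have "P - {y} - Q = {}" using 0 by simp
    then have "Q = P - {y}" using 0 by blast
    then show ?case using 0 by simp
  next
    case (Suc n)
    have "Q \<noteq> P - {y}" using Suc.prems(3) by auto
    from L2_step[OF F fano P sP rP yP yz Suc.prems(1) this Suc.prems(2)]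
    obtain p where p: "p \<in> P - {y} - Q" "insert p Q \<union> {r, z} \<in> \<Delta>" by blast
    have "card (P - {y} - insert p Q) = card (P - {y} - Q - {p})"
      by (metis Diff_insert)
    also have "\<dots> = n" using p(1) Suc.prems(3) fP by (simp add: card_Diff_singleton)
    finally show ?case using Suc.IH[of "insert p Q"] p Suc.prems(1) by blast
  qed
  show ?thesis using ind[of "{}"] rz by simp
qed

theorem lemma3p7:
  fixes R :: "(real ^ 'n) set" and \<Delta> :: "(real ^ 'n) set set"
    and P Q :: "(real ^ 'n) set" and \<rho>' \<rho>h' :: "real ^ 'n"
  assumes "complete_nonsingular_fan R \<Delta>"
    and "toric_fano R \<Delta>"
    and "\<forall>\<tau>\<in>\<Delta>. orbit_closure_fano R \<Delta> \<tau>"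
    and "primitive_set R \<Delta> P" and "primitive_set R \<Delta> Q" and "P \<noteq> Q"
    and "\<rho>' \<in> R" and "\<rho>h' \<in> R"
    and "primitive_relation R \<Delta> P {\<rho>'} (\<lambda>_. 1)"
    and "primitive_relation R \<Delta> Q {\<rho>h'} (\<lambda>_. 1)"
    and "\<rho>' = \<rho>h' \<or> {\<rho>', \<rho>h'} \<in> \<Delta>"
  shows "P \<inter> Q = {}"
proof (rule ccontr)
  assume "P \<inter> Q \<noteq> {}"
  then obtain x where xP: "x \<in> P" and xQ: "x \<in> Q" by blast
  note F = assms(1) and fano = assms(3)
  have sP: "(\<Sum>\<rho>\<in>P. \<rho>) = \<rho>'" using assms(9) unfolding primitive_relation_def by simp
  have sQ: "(\<Sum>\<rho>\<in>Q. \<rho>) = \<rho>h'" using assms(10) unfolding primitive_relation_def by simp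
  have rP: "\<rho>' \<notin> P" using rel_not_mem[OF F assms(4) sP assms(7)] .
  have rQ: "\<rho>h' \<notin> Q" using rel_not_mem[OF F assms(5) sQ assms(8)] .
  have PR: "P \<subseteq> R" using assms(4) unfolding primitive_set_def by auto
  have QR: "Q \<subseteq> R" using assms(5) unfolding primitive_set_def by auto
  have fP: "finite P" using fanD(1)[OF F] PR finite_subset by blast
  have fQ: "finite Q" using fanD(1)[OF F] QR finite_subset by blast
  have rr: "{\<rho>', \<rho>h'} \<in> \<Delta>" using assms(11) fanD(4)[OF F] assms(7) by auto
  then have rr': "{\<rho>h', \<rho>'} \<in> \<Delta>" by (simp add: insert_commute)
  define P' where "P' = P - {x}"
  define Q' where "Q' = Q - {x}"
  define \<sigma>1 where "\<sigma>1 = P' \<union> {\<rho>', \<rho>h'}"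
  define \<sigma>2 where "\<sigma>2 = Q' \<union> {\<rho>h', \<rho>'}"
  have s1: "\<sigma>1 \<in> \<Delta>" unfolding \<sigma>1_def P'_def
    using L2[OF F fano assms(4) sP assms(7) rr xP] xQ rQ by blast
  have s2: "\<sigma>2 \<in> \<Delta>" unfolding \<sigma>2_def Q'_def
    using L2[OF F fano assms(5) sQ assms(8) rr' xQ] xP rP by blast
  have f1s: "finite \<sigma>1" using cone_indep[OF F s1] by blast
  have f2s: "finite \<sigma>2" using cone_indep[OF F s2] by blast
  define f1 where "f1 \<rho> = (if \<rho> \<in> P' then 1 else 0) + (if \<rho> = \<rho>h' then 1 else (0::real))" for \<rho>
  define f2 where "f2 \<rho> = (if \<rho> \<in> Q' then 1 else 0) + (if \<rho> = \<rho>' then 1 else (0::real))" for \<rho>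
  have sP': "(\<Sum>\<rho>\<in>P'. \<rho>) = \<rho>' - x" using sum.remove[OF fP xP, of "\<lambda>v. v"] sP unfolding P'_def by simp
  have sQ': "(\<Sum>\<rho>\<in>Q'. \<rho>) = \<rho>h' - x" using sum.remove[OF fQ xQ, of "\<lambda>v. v"] sQ unfolding Q'_def by simp
  have e1: "(\<Sum>\<rho>\<in>\<sigma>1. f1 \<rho> *\<^sub>R \<rho>) = \<rho>' - x + \<rho>h'"
  proof -
    have "(\<Sum>\<rho>\<in>\<sigma>1. f1 \<rho> *\<^sub>R \<rho>) = (\<Sum>\<rho>\<in>\<sigma>1. (if \<rho> \<in> P' then 1 else 0) *\<^sub>R \<rho>) + (\<Sum>\<rho>\<in>\<sigma>1. (if \<rho> = \<rho>h' then 1 else 0) *\<^sub>R \<rho>)"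
      unfolding f1_def by (simp add: scaleR_add_left sum.distrib)
    also have "\<dots> = (\<Sum>\<rho>\<in>P'. \<rho>) + 1 *\<^sub>R \<rho>h'"
      using sum_ind_subset[OF f1s, of P'] sum_ind_delta[OF f1s, of \<rho>h' 1] unfolding \<sigma>1_def by auto
    finally show ?thesis using sP' by simp
  qed
  have e2: "(\<Sum>\<rho>\<in>\<sigma>2. f2 \<rho> *\<^sub>R \<rho>) = \<rho>h' - x + \<rho>'"
  proof -
    have "(\<Sum>\<rho>\<in>\<sigma>2. f2 \<rho> *\<^sub>R \<rho>) = (\<Sum>\<rho>\<in>\<sigma>2. (if \<rho> \<in> Q' then 1 else 0) *\<^sub>R \<rho>) + (\<Sum>\<rho>\<in>\<sigma>2. (if \<rho> = \<rho>' then 1 else 0) *\<^sub>R \<rho>)"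
      unfolding f2_def by (simp add: scaleR_add_left sum.distrib)
    also have "\<dots> = (\<Sum>\<rho>\<in>Q'. \<rho>) + 1 *\<^sub>R \<rho>'"
      using sum_ind_subset[OF f2s, of Q'] sum_ind_delta[OF f2s, of \<rho>' 1] unfolding \<sigma>2_def by auto
    finally show ?thesis using sQ' by simp
  qed
  have eq: "(\<Sum>\<rho>\<in>\<sigma>1. f1 \<rho> *\<^sub>R \<rho>) = (\<Sum>\<rho>\<in>\<sigma>2. f2 \<rho> *\<^sub>R \<rho>)" unfolding e1 e2 by simp
  have f1n: "\<forall>\<rho>\<in>\<sigma>1. 0 \<le> f1 \<rho>" unfolding f1_def by simp
  have f2n: "\<forall>\<rho>\<in>\<sigma>2. 0 \<le> f2 \<rho>" unfolding f2_def by simp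
  have U1: "\<And>\<rho>. \<rho> \<in> \<sigma>1 \<Longrightarrow> f1 \<rho> = (if \<rho> \<in> \<sigma>2 then f2 \<rho> else 0)"
    using cone_unique[OF F s1 s2 f1n f2n eq] by blast
  have U2: "\<And>\<rho>. \<rho> \<in> \<sigma>2 \<Longrightarrow> f2 \<rho> = (if \<rho> \<in> \<sigma>1 then f1 \<rho> else 0)"
    using cone_unique[OF F s2 s1 f2n f1n eq[symmetric]] by blast
  have r1: "\<rho>' \<in> \<sigma>1" "\<rho>' \<in> \<sigma>2" unfolding \<sigma>1_def \<sigma>2_def by auto
  have "f1 \<rho>' = f2 \<rho>'" using U1[OF r1(1)] r1(2) by simp
  moreover have "\<rho>' \<notin> P'" using rP unfolding P'_def by blast
  ultimately have req: "\<rho>' = \<rho>h'" unfolding f1_def f2_def by (auto split: if_splits)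
  have "P' \<subseteq> Q'"
  proof
    fix p assume p: "p \<in> P'"
    then have "p \<in> \<sigma>1" unfolding \<sigma>1_def by blast
    moreover have "f1 p \<ge> 1" using p unfolding f1_def by simp
    ultimately have "p \<in> \<sigma>2" using U1 by (cases "p \<in> \<sigma>2") auto
    moreover have "p \<noteq> \<rho>'" using p rP unfolding P'_def by blast
    ultimately show "p \<in> Q'" using req unfolding \<sigma>2_def by blast
  qed
  moreover have "Q' \<subseteq> P'"
  proof
    fix p assume p: "p \<in> Q'"
    then have "p \<in> \<sigma>2" unfolding \<sigma>2_def by blast
    moreover have "f2 p \<ge> 1" using p unfolding f2_def by simp
    ultimately have "p \<in> \<sigma>1" using U2 by (cases "p \<in> \<sigma>1") auto
    moreover have "p \<noteq> \<rho>h'" using p rQ unfolding Q'_def by blast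
    ultimately show "p \<in> P'" using req unfolding \<sigma>1_def by blast
  qed
  ultimately have "P' = Q'" by blast
  then have "P = Q" using xP xQ unfolding P'_def Q'_def by blast
  then show False using assms(6) by simp
qed

end
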